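(* Let $V:\mathbb R\to\mathbb R$ be continuous, Lipschitz with constant $1$, and piecewise differentiable. Let $r_k>0$ with $r_k\to0$, $q_k=e^{-r_k}$, and let $b_k:\mathbb R\to\mathbb R$ be continuous piecewise linear functions whose slope is $\pm1$ on each interval $(a,a+1)$, $a\in\mathbb Z$, such that $B_k(\tau):=r_kb_k(\tau/r_k)$ converges uniformly to $V$. Let $t_k\in\mathbb Z$ with $r_kt_k\to\tau$. Then $$\lim_{k\to\infty}r_k\ln\Phi_{b_k}(z,t_k)=-\int_{-\infty}^{\tau}-\tfrac12(1+V'(M))\ln(1-e^Mz^{-1})\,dM+\int_\tau^\infty-\tfrac12(1-V'(M))\ln(1-e^{-M}z)\,dM.$$
   Context: For such $b_k$ and $q=q_k$, let $D_k^+=\{m\in\mathbb Z+\frac12: b_k'(m)=-1\}$ and $D_k^-=\{m\in\mathbb Z+\frac12: b_k'(m)=+1\}$, and $$\Phi_{+,b_k}(z,t)=\prod_{m>t,\,m\in D_k^+}(1-zq_k^m),\qquad\Phi_{-,b_k}(z,t)=\prod_{m<t,\,m\in D_k^-}(1-z^{-1}q_k^{-m}),\qquad \Phi_{b_k}=\Phi_{-,b_k}/\Phi_{+,b_k},$$ with $\ln\Phi_{b_k}$ understood as the sum of principal logarithms of the factors; $\ln$ denotes the principal branch. *)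

theory Defs
  imports "HOL-Analysis.Analysis"
begin

definition piecewise_differentiable_real :: "(real \<Rightarrow> real) \<Rightarrow> bool" where
  "piecewise_differentiable_real V \<longleftrightarrow>
     (\<exists>S. (\<forall>a b. finite (S \<inter> {a..b})) \<and> (\<forall>x. x \<notin> S \<longrightarrow> V differentiable (at x)))"

definition lattice_path :: "(real \<Rightarrow> real) \<Rightarrow> bool" where
  "lattice_path b \<longleftrightarrow> continuous_on UNIV b \<and>
     (\<forall>a::int. \<exists>s\<in>{1, -1::real}. \<forall>x\<in>{real_of_int a<..<real_of_int a + 1}.
        b x = b (real_of_int a) + s * (x - real_of_int a))"

definition Dplus :: "(real \<Rightarrow> real) \<Rightarrow> real set" where
  "Dplus b = {m. (\<exists>j::int. m = real_of_int j + 1/2) \<and> deriv b m = -1}"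

definition Dminus :: "(real \<Rightarrow> real) \<Rightarrow> real set" where
  "Dminus b = {m. (\<exists>j::int. m = real_of_int j + 1/2) \<and> deriv b m = 1}"

text \<open>ln Phi_b(z,t) with parameter q, as the sum of principal logarithms of the
  factors of Phi_- minus those of Phi_+.\<close>
definition lnPhi :: "(real \<Rightarrow> real) \<Rightarrow> real \<Rightarrow> complex \<Rightarrow> real \<Rightarrow> complex" where
  "lnPhi b q z t =
     (\<Sum>\<^sub>\<infinity> m \<in> {m \<in> Dminus b. m < t}. Ln (1 - complex_of_real (q powr (- m)) / z))
   - (\<Sum>\<^sub>\<infinity> m \<in> {m \<in> Dplus b. m > t}. Ln (1 - z * complex_of_real (q powr m)))"

end

theory Submission
  imports Defs "HOL-Real_Asymp.Real_Asymp"
begin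

lemma neg_countable: "countable (S::real set) \<Longrightarrow> negligible S"
proof -
  assume "countable S"
  then have "negligible (\<Union>((\<lambda>x. {x}) ` S))"
    by (intro negligible_countable_Union) auto
  then show ?thesis by simp
qed

lemma locfin_countable:
  assumes "\<And>a b. finite (C \<inter> {a..b::real})"
  shows "countable C"
proof -
  have "C = (\<Union>n::nat. C \<inter> {-real n..real n})"
  proof (intro equalityI subsetI)
    fix x assume "x \<in> C"
    obtain n::nat where "\<bar>x\<bar> \<le> real n" using real_arch_simple by blast
    then show "x \<in> (\<Union>n::nat. C \<inter> {-real n..real n})" using \<open>x\<in>C\<close> by (auto intro!: exI[of _ n])
  qed auto
  also have "countable \<dots>" using assms by (intro countable_UN) (auto intro: countable_finite)
  finally show ?thesis .
qed

lemma has_integral_reflect_gen: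
  fixes f :: "real \<Rightarrow> 'b::banach"
  assumes "(f has_integral i) S"
  shows "((\<lambda>x. f(-x)) has_integral i) (uminus ` S)"
proof -
  define F where "F = (\<lambda>x. if x \<in> S then f x else 0)"
  have eq: "(\<lambda>x. if x \<in> uminus ` S then f (-x) else 0) = (\<lambda>x. F (-x))"
    by (auto simp: F_def fun_eq_iff image_iff)
  from assms have A: "\<forall>a b. F integrable_on cbox a b" and
    B: "\<forall>e>0. \<exists>B>0. \<forall>a b. ball 0 B \<subseteq> cbox a b \<longrightarrow> norm (integral (cbox a b) F - i) < e"
    unfolding has_integral_alt' F_def by auto
  show ?thesis
    unfolding has_integral_alt' eq
  proof (intro conjI allI impI)
    fix a b :: real
    have "F integrable_on cbox (-b) (-a)" using A by blast
    then show "(\<lambda>x. F (- x)) integrable_on cbox a b"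
      using integrable_reflect[of F "-a" "-b"] by simp
  next
    fix e :: real assume "e > 0"
    then obtain B where "B > 0" and B: "\<forall>a b. ball 0 B \<subseteq> cbox a b \<longrightarrow> norm (integral (cbox a b) F - i) < e"
      using B by blast
    show "\<exists>B>0. \<forall>a b. ball 0 B \<subseteq> cbox a b \<longrightarrow> norm (integral (cbox a b) (\<lambda>x. F (- x)) - i) < e"
    proof (intro exI conjI allI impI)
      fix a b :: real assume "ball 0 B \<subseteq> cbox a b"
      have "ball 0 B \<subseteq> cbox (-b) (-a)"
      proof
        fix x :: real assume "x \<in> ball 0 B"
        then have "-x \<in> ball 0 B" by (simp add: dist_real_def)
        then have "-x \<in> cbox a b" using \<open>ball 0 B \<subseteq> cbox a b\<close> by blast
        then show "x \<in> cbox (-b) (-a)" by auto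
      qed
      then have "norm (integral (cbox (-b) (-a)) F - i) < e" using B by blast
      moreover have "integral (cbox a b) (\<lambda>x. F (- x)) = integral (cbox (-b) (-a)) F"
        using integral_reflect[of "-a" "-b" F] by simp
      ultimately show "norm (integral (cbox a b) (\<lambda>x. F (- x)) - i) < e" by simp
    qed (use \<open>B>0\<close> in auto)
  qed
qed

lemma exp_has_integral_left:
  assumes "a > (0::real)"
  shows "((\<lambda>x. exp (a*x)) has_integral exp (a*T)/a) {..T}"
proof -
  have "((\<lambda>x. exp (-a*x)) has_integral exp (-a*(-T))/a) {-T..}"
    using has_integral_exp_minus_to_infinity[OF assms] .
  from has_integral_reflect_gen[OF this]
  have "((\<lambda>x. exp (-a * - x)) has_integral exp (-a*(-T))/a) {..T}"
    by (simp only: image_uminus_atLeast minus_minus)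
  then show ?thesis by simp
qed

lemma exp_integrable_left:
  assumes "a > (0::real)" shows "(\<lambda>x. c * exp (a*x)) integrable_on {..T}"
proof -
  have "(\<lambda>x. exp (a*x)) integrable_on {..T}"
    using exp_has_integral_left[OF assms, of T] by (rule has_integral_integrable)
  from integrable_on_cmult_left[OF this, of c] show ?thesis by simp
qed

lemma half_lim:
  fixes g :: "real \<Rightarrow> 'b::euclidean_space"
  assumes hint: "h integrable_on {..T}" and le: "\<And>x. x \<le> T \<Longrightarrow> norm (g x) \<le> h x"
    and gi: "\<And>n. (g has_integral I n) {a n..T}" and a: "filterlim a at_bot sequentially"
    and I: "I \<longlonglongrightarrow> I0"
  shows "(g has_integral I0) {..T}"
proof -
  define F where "F n x = (if x \<in> {a n..T} then g x else 0)" for n x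
  have Fi: "(F n has_integral I n) {..T}" for n
    using has_integral_restrict[of "{a n..T}" "{..T}" g] gi unfolding F_def by auto
  have conv: "(\<lambda>n. F n x) \<longlonglongrightarrow> g x" if "x \<in> {..T}" for x
  proof -
    have "eventually (\<lambda>n. a n \<le> x) sequentially" using a by (simp add: filterlim_at_bot)
    then have "eventually (\<lambda>n. F n x = g x) sequentially"
      using that by (elim eventually_mono) (auto simp: F_def)
    then show ?thesis by (rule tendsto_eventually)
  qed
  have le2: "norm (F n x) \<le> h x" if "x \<in> {..T}" for n x
    using le[of x] that by (auto simp: F_def dest: order_trans[OF norm_ge_zero])
  have DC: "g integrable_on {..T}" "(\<lambda>n. integral {..T} (F n)) \<longlonglongrightarrow> integral {..T} g"
    using dominated_convergence[of F "{..T}" h g] Fi hint le2 conv by (auto simp: integrable_on_def)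
  have "(\<lambda>n. integral {..T} (F n)) = I" using Fi by (auto simp: fun_eq_iff integral_unique)
  with DC I have "I0 = integral {..T} g" using LIMSEQ_unique by metis
  with DC show ?thesis by (simp add: has_integral_integral)
qed

lemma move_lim:
  fixes g :: "nat \<Rightarrow> real \<Rightarrow> 'b::euclidean_space"
  assumes gi: "\<And>k. g k integrable_on {..T k}" and hint: "h integrable_on {..U}"
    and le: "\<And>k x. x \<le> U \<Longrightarrow> norm (g k x) \<le> h x"
    and conv: "\<And>x. x \<le> U \<Longrightarrow> x \<noteq> T0 \<Longrightarrow> (\<lambda>k. g k x) \<longlonglongrightarrow> G x"
    and T: "T \<longlonglongrightarrow> T0" and TU: "\<And>k. T k \<le> U"
  shows "G integrable_on {..T0}" "(\<lambda>k. integral {..T k} (g k)) \<longlonglongrightarrow> integral {..T0} G"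
proof -
  have T0U: "T0 \<le> U" using T TU by (intro LIMSEQ_le_const2) auto
  define S where "S = {..U} - {T0}"
  define F where "F k x = (if x \<in> {..T k} then g k x else 0)" for k x
  define GG where "GG x = (if x \<in> {..T0} then G x else 0)" for x
  have negS: "negligible {T0}" by simp
  have n1: "negligible {x \<in> {..U} - S. P x}" for P :: "real \<Rightarrow> bool"
    by (rule negligible_subset[OF negS]) (auto simp: S_def)
  have n2: "negligible {x \<in> S - {..U}. P x}" for P :: "real \<Rightarrow> bool"
  proof -
    have "{x \<in> S - {..U}. P x} = {}" by (auto simp: S_def)
    then show ?thesis using negligible_empty by metis
  qed
  have Fi: "(F k has_integral integral {..T k} (g k)) S" for k
  proof -
    have "(F k has_integral integral {..T k} (g k)) {..U}"
      using has_integral_restrict[of "{..T k}" "{..U}" "g k"] gi[of k] TU[of k]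
      unfolding F_def by (auto simp: has_integral_integral)
    then show ?thesis using has_integral_spike_set_eq[OF n1 n2] by blast
  qed
  have hS: "h integrable_on S" using integrable_spike_set[OF hint n1 n2] .
  have le2: "norm (F k x) \<le> h x" if "x \<in> S" for k x
    using le[of x k] that by (auto simp: F_def S_def dest: order_trans[OF norm_ge_zero])
  have conv2: "(\<lambda>k. F k x) \<longlonglongrightarrow> GG x" if "x \<in> S" for x
  proof (cases "x < T0")
    case True
    then have "eventually (\<lambda>k. x < T k) sequentially" using T order_tendstoD(1) by blast
    then have "eventually (\<lambda>k. F k x = g k x) sequentially" by eventually_elim (auto simp: F_def)
    then have "(\<lambda>k. F k x) \<longlonglongrightarrow> G x \<longleftrightarrow> (\<lambda>k. g k x) \<longlonglongrightarrow> G x" by (rule tendsto_cong)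
    then show ?thesis using conv[of x] that True by (auto simp: S_def GG_def)
  next
    case False
    then have "x > T0" using that by (auto simp: S_def)
    then have "eventually (\<lambda>k. T k < x) sequentially" using T order_tendstoD(2) by blast
    then have "eventually (\<lambda>k. F k x = 0) sequentially" by eventually_elim (auto simp: F_def)
    then show ?thesis using \<open>x > T0\<close> by (auto simp: GG_def intro: tendsto_eventually)
  qed
  have DC: "GG integrable_on S" "(\<lambda>k. integral S (F k)) \<longlonglongrightarrow> integral S GG"
    using dominated_convergence[of F S h GG] Fi hS le2 conv2 by (auto simp: integrable_on_def)
  have GGU: "GG integrable_on {..U}" using integrable_spike_set[OF DC(1) n2 n1] .
  then have GI: "G integrable_on {..T0}"
    using has_integral_restrict[of "{..T0}" "{..U}" G] T0U unfolding GG_def integrable_on_def by auto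
  then show "G integrable_on {..T0}" .
  have "integral S GG = integral {..U} GG" using integral_spike_set[OF n2 n1] .
  also have "\<dots> = integral {..T0} G"
    using has_integral_restrict[of "{..T0}" "{..U}" G] T0U GI unfolding GG_def
    by (auto intro!: integral_unique simp: has_integral_integral)
  finally have e1: "integral S GG = integral {..T0} G" .
  have "(\<lambda>k. integral S (F k)) = (\<lambda>k. integral {..T k} (g k))" using Fi by (auto intro: integral_unique)
  with DC e1 show "(\<lambda>k. integral {..T k} (g k)) \<longlonglongrightarrow> integral {..T0} G" by simp
qed

lemma tail_lim:
  fixes g :: "real \<Rightarrow> 'b::euclidean_space"
  assumes hint: "h integrable_on {..T}" and le: "\<And>x. x \<le> T \<Longrightarrow> norm (g x) \<le> h x"
    and gi: "\<And>n. g integrable_on {a n..T}" and a: "filterlim a at_bot sequentially"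
  shows "g integrable_on {..T}" "(\<lambda>n. integral {a n..T} g) \<longlonglongrightarrow> integral {..T} g"
proof -
  define F where "F n x = (if x \<in> {a n..T} then g x else 0)" for n x
  have Fi: "(F n has_integral integral {a n..T} g) {..T}" for n
    using has_integral_restrict[of "{a n..T}" "{..T}" g] gi[of n] unfolding F_def
    by (auto simp: has_integral_integral)
  have conv: "(\<lambda>n. F n x) \<longlonglongrightarrow> g x" if "x \<in> {..T}" for x
  proof -
    have "eventually (\<lambda>n. a n \<le> x) sequentially" using a by (simp add: filterlim_at_bot)
    then have "eventually (\<lambda>n. F n x = g x) sequentially"
      using that by (elim eventually_mono) (auto simp: F_def)
    then show ?thesis by (rule tendsto_eventually)
  qed
  have le2: "norm (F n x) \<le> h x" if "x \<in> {..T}" for n x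
    using le[of x] that by (auto simp: F_def dest: order_trans[OF norm_ge_zero])
  have DC: "g integrable_on {..T}" "(\<lambda>n. integral {..T} (F n)) \<longlonglongrightarrow> integral {..T} g"
    using dominated_convergence[of F "{..T}" h g] Fi hint le2 conv by (auto simp: integrable_on_def)
  then show "g integrable_on {..T}" by simp
  have "(\<lambda>n. integral {..T} (F n)) = (\<lambda>n. integral {a n..T} g)" using Fi by (auto simp: fun_eq_iff integral_unique)
  with DC show "(\<lambda>n. integral {a n..T} g) \<longlonglongrightarrow> integral {..T} g" by simp
qed

lemma ftc_lip_aux:
  fixes W w :: "real \<Rightarrow> real"
  assumes C: "\<And>a b. finite (C \<inter> {a..b})" and cont: "continuous_on UNIV W"
    and der: "\<And>x. x \<notin> C \<Longrightarrow> (W has_real_derivative w x) (at x)"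
    and bd: "\<And>x. x \<notin> C \<Longrightarrow> \<bar>w x\<bar> \<le> 1" and xy: "x \<le> y"
  shows "\<bar>W y - W x\<bar> \<le> y - x"
proof -
  define w' where "w' u = (if u \<in> C then 0 else w u)" for u
  have "(w' has_integral (W y - W x)) {x..y}"
  proof (rule fundamental_theorem_of_calculus_strong[OF C[of x y] xy])
    fix u assume "u \<in> {x..y} - C \<inter> {x..y}"
    then have "u \<notin> C" by auto
    then show "(W has_vector_derivative w' u) (at u)"
      using der[of u] by (simp add: w'_def has_real_derivative_iff_has_vector_derivative)
  qed (use cont continuous_on_subset in blast)
  moreover have b1: "\<And>u. u \<in> cbox x y \<Longrightarrow> norm (w' u) \<le> 1" by (simp add: w'_def bd)
  ultimately have "norm (W y - W x) \<le> 1 * measure lborel (cbox x y)"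
    using has_integral_bound[of 1 w'] by (metis box_real(2) zero_le_one)
  then show ?thesis using xy by simp
qed

lemma ftc_lip:
  fixes W w :: "real \<Rightarrow> real"
  assumes C: "\<And>a b. finite (C \<inter> {a..b})" and cont: "continuous_on UNIV W"
    and der: "\<And>x. x \<notin> C \<Longrightarrow> (W has_real_derivative w x) (at x)"
    and bd: "\<And>x. x \<notin> C \<Longrightarrow> \<bar>w x\<bar> \<le> 1"
  shows "\<bar>W y - W x\<bar> \<le> \<bar>y - x\<bar>"
proof (cases "x \<le> y")
  case True then show ?thesis using ftc_lip_aux[OF assms True] by simp
next
  case False then show ?thesis using ftc_lip_aux[OF assms, of y x] by simp
qed

lemma polyexp_bound:
  fixes A T x :: real
  assumes "A \<ge> 0" "x \<le> T"
  shows "(A + \<bar>x\<bar>) * exp x \<le> ((A + \<bar>T\<bar>) * exp (\<bar>T\<bar>/2) + 2) * exp (x/2)"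
proof -
  have ex: "exp x = exp (x/2) * exp (x/2)" by (simp flip: exp_add)
  have key: "(A + \<bar>x\<bar>) * exp (x/2) \<le> (A + \<bar>T\<bar>) * exp (\<bar>T\<bar>/2) + 2"
  proof (cases "x \<ge> 0")
    case True
    then have "\<bar>x\<bar> \<le> \<bar>T\<bar>" "exp (x/2) \<le> exp (\<bar>T\<bar>/2)" using assms by auto
    then have "(A + \<bar>x\<bar>) * exp (x/2) \<le> (A + \<bar>T\<bar>) * exp (\<bar>T\<bar>/2)"
      using assms by (intro mult_mono) auto
    then show ?thesis by simp
  next
    case False
    have e1: "exp (x/2) \<le> exp (\<bar>T\<bar>/2)" using False by simp
    have "A * exp (x/2) \<le> (A + \<bar>T\<bar>) * exp (\<bar>T\<bar>/2)"
      using assms e1 by (intro mult_mono) auto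
    moreover have "-x \<le> 2 * exp (-x/2)" using exp_ge_add_one_self[of "-x/2"] by simp
    then have "-x * exp (x/2) \<le> 2 * exp (-x/2) * exp (x/2)" by (intro mult_right_mono) auto
    then have "-x * exp (x/2) \<le> 2" by (simp add: mult.assoc flip: exp_add)
    ultimately show ?thesis using False by (simp add: algebra_simps)
  qed
  have "(A + \<bar>x\<bar>) * exp x = ((A + \<bar>x\<bar>) * exp (x/2)) * exp (x/2)" using ex by simp
  also have "\<dots> \<le> ((A + \<bar>T\<bar>) * exp (\<bar>T\<bar>/2) + 2) * exp (x/2)"
    using key by (intro mult_right_mono) auto
  finally show ?thesis .
qed

lemma ibp:
  fixes W w :: "real \<Rightarrow> real" and f f' :: "real \<Rightarrow> complex"
  assumes C: "\<And>a b. finite (C \<inter> {a..b})" and cont: "continuous_on UNIV W"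
    and der: "\<And>x. x \<notin> C \<Longrightarrow> (W has_real_derivative w x) (at x)"
    and wbd: "\<And>x. \<bar>w x\<bar> \<le> 1"
    and Wbd: "\<And>x. \<bar>W x\<bar> \<le> A + \<bar>x\<bar>"
    and fd: "\<And>x. (f has_vector_derivative f' x) (at x)"
    and f'c: "continuous_on UNIV f'"
    and fb: "\<And>x. x \<le> T \<Longrightarrow> norm (f x) \<le> c * exp x"
    and f'b: "\<And>x. x \<le> T \<Longrightarrow> norm (f' x) \<le> c * exp x"
  shows "(\<lambda>x. of_real (W x) * f' x) integrable_on {..T}"
    "((\<lambda>x. of_real (w x) * f x) has_integral
        (of_real (W T) * f T - integral {..T} (\<lambda>x. of_real (W x) * f' x))) {..T}"
proof -
  have A0: "A \<ge> 0" using Wbd[of 0] by simp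
  have c0: "c \<ge> 0" using fb[of T] by (auto dest: order_trans[OF norm_ge_zero] simp: zero_le_mult_iff)
  define K where "K = c * ((A + \<bar>T\<bar>) * exp (\<bar>T\<bar>/2) + 2)"
  have K0: "K \<ge> 0" using c0 A0 by (simp add: K_def)
  have PB: "norm (of_real (W x) * g x) \<le> K * exp (x/2)"
    if "x \<le> T" "norm (g x) \<le> c * exp x" for x and g :: "real \<Rightarrow> complex"
  proof -
    have "norm (of_real (W x) * g x) = \<bar>W x\<bar> * norm (g x)" by (simp add: norm_mult)
    also have "\<dots> \<le> (A + \<bar>x\<bar>) * (c * exp x)"
      using Wbd[of x] that by (intro mult_mono) auto
    also have "\<dots> = c * ((A + \<bar>x\<bar>) * exp x)" by simp
    also have "\<dots> \<le> c * (((A + \<bar>T\<bar>) * exp (\<bar>T\<bar>/2) + 2) * exp (x/2))"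
      using polyexp_bound[OF A0 that(1)] c0 by (intro mult_left_mono) auto
    finally show ?thesis by (simp add: K_def)
  qed
  have hint: "(\<lambda>x. K * exp ((1/2) * x)) integrable_on {..T}" by (rule exp_integrable_left) simp
  have hint': "(\<lambda>x. K * exp (x/2)) integrable_on {..T}" using hint by (simp add: field_simps)
  have Wc: "continuous_on UNIV (\<lambda>x. complex_of_real (W x))"
 by (intro continuous_intros cont)
  have G2c: "continuous_on UNIV (\<lambda>x. of_real (W x) * f' x)"
    by (intro continuous_intros cont f'c)
  define a where "a n = T - real n" for n :: nat
  have a_bot: "filterlim a at_bot sequentially" unfolding a_def by real_asymp
  have aT: "a n \<le> T" for n by (simp add: a_def)
  have piece: "((\<lambda>x. of_real (w x) * f x + of_real (W x) * f' x) has_integral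
      (of_real (W T) * f T - of_real (W s) * f s)) {s..T}" if "s \<le> T" for s
  proof (rule fundamental_theorem_of_calculus_strong[OF C[of s T] that])
    fix u assume "u \<in> {s..T} - C \<inter> {s..T}"
    then have "u \<notin> C" by auto
    have d1: "((\<lambda>x. complex_of_real (W x)) has_vector_derivative of_real (w u)) (at u)"
      using der[OF \<open>u \<notin> C\<close>] by (rule has_vector_derivative_of_real)
    show "((\<lambda>x. of_real (W x) * f x) has_vector_derivative of_real (w u) * f u + of_real (W u) * f' u) (at u)"
      using has_vector_derivative_mult[OF d1 fd[of u]] by (simp add: algebra_simps)
  next
    have "continuous_on UNIV f" using fd
      by (meson continuous_at_imp_continuous_on has_vector_derivative_continuous)
    then show "continuous_on {s..T} (\<lambda>x. of_real (W x) * f x)"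
      using Wc by (intro continuous_intros) (auto intro: continuous_on_subset)
  qed
  have G2i: "(\<lambda>x. of_real (W x) * f' x) integrable_on {s..T}" for s
    using G2c by (intro integrable_continuous_interval) (auto intro: continuous_on_subset)
  have TL: "(\<lambda>x. of_real (W x) * f' x) integrable_on {..T}"
      "(\<lambda>n. integral {a n..T} (\<lambda>x. of_real (W x) * f' x)) \<longlonglongrightarrow> integral {..T} (\<lambda>x. of_real (W x) * f' x)"
    using tail_lim[OF hint' _ G2i a_bot] PB f'b by auto
  then show "(\<lambda>x. of_real (W x) * f' x) integrable_on {..T}" by simp
  have piece2: "((\<lambda>x. of_real (w x) * f x) has_integral
      (of_real (W T) * f T - of_real (W (a n)) * f (a n) - integral {a n..T} (\<lambda>x. of_real (W x) * f' x))) {a n..T}" for n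
    using has_integral_diff[OF piece[OF aT[of n]] integrable_integral[OF G2i[of "a n"]]] by simp
  have bnd: "norm (of_real (W (a n)) * f (a n)) \<le> K * exp (a n / 2)" for n
    using PB[of "a n" f] fb[OF aT[of n]] aT[of n] by simp
  have "(\<lambda>n. K * exp (a n / 2)) \<longlonglongrightarrow> 0" unfolding a_def by real_asymp
  then have z: "(\<lambda>n. of_real (W (a n)) * f (a n)) \<longlonglongrightarrow> 0"
    by (rule Lim_null_comparison[rotated]) (use bnd in auto)
  have lim: "(\<lambda>n. of_real (W T) * f T - of_real (W (a n)) * f (a n) - integral {a n..T} (\<lambda>x. of_real (W x) * f' x))
      \<longlonglongrightarrow> of_real (W T) * f T - 0 - integral {..T} (\<lambda>x. of_real (W x) * f' x)"
    by (intro tendsto_intros z TL(2))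
  have wfb: "norm (of_real (w x) * f x) \<le> (c * exp (\<bar>T\<bar>/2)) * exp (x/2)" if "x \<le> T" for x
  proof -
    have "norm (of_real (w x) * f x) = \<bar>w x\<bar> * norm (f x)" by (simp add: norm_mult)
    also have "\<dots> \<le> 1 * norm (f x)" using wbd[of x] by (intro mult_right_mono) auto
    also have "\<dots> \<le> c * exp x" using fb[OF that] by simp
    also have "\<dots> = c * (exp (x/2) * exp (x/2))" by (simp flip: exp_add)
    also have "\<dots> \<le> c * (exp (\<bar>T\<bar>/2) * exp (x/2))"
      using c0 that by (intro mult_left_mono mult_right_mono) auto
    finally show ?thesis by simp
  qed
  have hint2: "(\<lambda>x. (c * exp (\<bar>T\<bar>/2)) * exp ((1/2) * x)) integrable_on {..T}" by (rule exp_integrable_left) simp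
  show "((\<lambda>x. of_real (w x) * f x) has_integral
        (of_real (W T) * f T - integral {..T} (\<lambda>x. of_real (W x) * f' x))) {..T}"
    using half_lim[of "\<lambda>x. (c * exp (\<bar>T\<bar>/2)) * exp (x/2)" T "\<lambda>x. of_real (w x) * f x", OF _ wfb piece2 a_bot lim]
      hint2 by (simp add: field_simps)
qed

definition sl :: "(real \<Rightarrow> real) \<Rightarrow> int \<Rightarrow> real" where
  "sl b a = b (of_int a + 1) - b (of_int a)"

lemma lp_closed_conj:
  assumes "lattice_path b"
  shows "sl b a \<in> {1, -1} \<and> (\<forall>x \<in> {real_of_int a..real_of_int a + 1}. b x = b (of_int a) + sl b a * (x - of_int a))"
proof -
  obtain s where s: "s \<in> {1, -1::real}"
    and lin: "\<forall>x\<in>{real_of_int a<..<real_of_int a + 1}. b x = b (real_of_int a) + s * (x - real_of_int a)"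
    using assms unfolding lattice_path_def by blast
  have cb: "continuous_on UNIV b" using assms unfolding lattice_path_def by blast
  have cl: "b x - (b (of_int a) + s * (x - of_int a)) = 0" if "x \<in> {real_of_int a..real_of_int a + 1}" for x
  proof -
    have c1: "continuous_on (closure {real_of_int a<..<real_of_int a + 1}) (\<lambda>x. b x - (b (real_of_int a) + s * (x - real_of_int a)))"
      by (intro continuous_intros continuous_on_subset[OF cb]) auto
    have c2: "x \<in> closure {real_of_int a<..<real_of_int a + 1}" using that by simp
    have c3: "\<And>y. y \<in> {real_of_int a<..<real_of_int a + 1} \<Longrightarrow> b y - (b (real_of_int a) + s * (y - real_of_int a)) = 0"
      using lin by auto
    show ?thesis using continuous_constant_on_closure[OF c1 c3 c2] .
  qed
  have "sl b a = s" using cl[of "of_int a + 1"] by (simp add: sl_def)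
  moreover have "\<forall>x \<in> {real_of_int a..real_of_int a + 1}. b x = b (of_int a) + s * (x - of_int a)"
  proof
    fix x assume "x \<in> {real_of_int a..real_of_int a + 1}"
    from cl[OF this] show "b x = b (of_int a) + s * (x - of_int a)" by (simp only: right_minus_eq)
  qed
  ultimately show ?thesis using s by (simp only:)
qed

lemma lp_closed:
  assumes "lattice_path b"
  shows "sl b a \<in> {1, -1}"
  using lp_closed_conj[OF assms] by blast

lemma lp_closed2:
  assumes "lattice_path b" "x \<in> {real_of_int a..real_of_int a + 1}"
  shows "b x = b (of_int a) + sl b a * (x - of_int a)"
  using lp_closed_conj[OF assms(1), of a] assms(2) by blast

lemma lp_sl_abs: "lattice_path b \<Longrightarrow> \<bar>sl b a\<bar> = 1"
  using lp_closed[of b a] by auto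

lemma lp_deriv:
  assumes "lattice_path b" and x: "x \<in> {of_int a<..<of_int a + 1}"
  shows "(b has_real_derivative sl b a) (at x)"
proof -
  have d: "((\<lambda>y. b (of_int a) + sl b a * (y - of_int a)) has_real_derivative sl b a) (at x)"
    by (auto intro!: derivative_eq_intros)
  show ?thesis
  proof (rule has_field_derivative_transform_within_open[OF d, of "{of_int a<..<of_int a + 1}"])
    show "x \<in> {real_of_int a<..<real_of_int a + 1}" using x .
    fix y assume "y \<in> {real_of_int a<..<real_of_int a + 1}"
    then show "b (real_of_int a) + sl b a * (y - real_of_int a) = b y"
      using lp_closed2[OF assms(1), of y a] by simp
  qed simp
qed

lemma lp_deriv_nonint:
  assumes "lattice_path b" and x: "x \<noteq> of_int \<lfloor>x\<rfloor>"
  shows "(b has_real_derivative sl b \<lfloor>x\<rfloor>) (at x)"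
proof (rule lp_deriv[OF assms(1)])
  have "of_int \<lfloor>x\<rfloor> < x" using x of_int_floor_le[of x] by linarith
  moreover have "x < of_int \<lfloor>x\<rfloor> + 1" by linarith
  ultimately show "x \<in> {of_int \<lfloor>x\<rfloor><..<of_int \<lfloor>x\<rfloor> + 1}" using x by auto
qed

lemma floor_half: "\<lfloor>of_int j + 1/2 :: real\<rfloor> = j"
  by (simp add: floor_eq_iff)

lemma lp_deriv_half:
  assumes "lattice_path b"
  shows "deriv b (of_int j + 1/2) = sl b j"
proof -
  have "(b has_real_derivative sl b j) (at (of_int j + 1/2))"
    by (rule lp_deriv[OF assms]) auto
  then show ?thesis by (rule DERIV_imp_deriv)
qed

lemma lp_scaled_deriv:
  assumes "lattice_path b" "r > 0" and x: "x / r \<noteq> of_int \<lfloor>x / r\<rfloor>"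
  shows "((\<lambda>x. r * b (x / r)) has_real_derivative sl b \<lfloor>x / r\<rfloor>) (at x)"
proof -
  have d1: "(b has_real_derivative sl b \<lfloor>x / r\<rfloor>) (at (x / r))"
    by (rule lp_deriv_nonint[OF assms(1) x])
  have d2: "((\<lambda>x. x / r) has_real_derivative 1 / r) (at x)"
    using assms(2) by (auto intro!: derivative_eq_intros)
  have ch: "((\<lambda>x. b (x / r)) has_real_derivative sl b \<lfloor>x / r\<rfloor> * (1 / r)) (at x)"
    by (rule DERIV_chain2[OF d1 d2])
  have eq: "r * (sl b \<lfloor>x / r\<rfloor> * (1 / r)) = sl b \<lfloor>x / r\<rfloor>" using assms(2) by (simp add: field_simps)
  from DERIV_cmult[OF ch, where c=r] show ?thesis unfolding eq .
qed

lemma lattice_locfin: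
  assumes "r > (0::real)"
  shows "finite ({x. x / r = of_int \<lfloor>x / r\<rfloor>} \<inter> {a..b})"
proof (rule finite_subset)
  show "{x. x / r = of_int \<lfloor>x / r\<rfloor>} \<inter> {a..b} \<subseteq> (\<lambda>j. r * of_int j) ` {\<lceil>a / r\<rceil>..\<lfloor>b / r\<rfloor>}"
  proof
    fix x assume x: "x \<in> {x. x / r = of_int \<lfloor>x / r\<rfloor>} \<inter> {a..b}"
    then have e: "x = r * of_int \<lfloor>x / r\<rfloor>" using assms by (auto simp: field_simps)
    have ab: "a / r \<le> x / r" "x / r \<le> b / r" using x assms by (auto simp: divide_right_mono)
    have xi: "x / r = of_int \<lfloor>x / r\<rfloor>" using x by auto
    have "\<lceil>a / r\<rceil> \<le> \<lfloor>x / r\<rfloor>" unfolding ceiling_le_iff using ab xi by linarith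
    moreover have "\<lfloor>x / r\<rfloor> \<le> \<lfloor>b / r\<rfloor>" using ab(2) by (rule floor_mono)
    ultimately have "\<lfloor>x / r\<rfloor> \<in> {\<lceil>a / r\<rceil>..\<lfloor>b / r\<rfloor>}" by simp
    then show "x \<in> (\<lambda>j. r * of_int j) ` {\<lceil>a / r\<rceil>..\<lfloor>b / r\<rfloor>}"
      by (rule image_eqI[where f = "\<lambda>j. r * of_int j", OF e])
  qed
qed simp

lemma stepA:
  fixes \<phi> :: "real \<Rightarrow> complex" and r K :: real and t :: int
  assumes r: "r > 0" and K: "K \<ge> 0"
    and bnd: "\<And>j::int. j \<le> t \<Longrightarrow> norm (\<phi> (of_int j + 1/2)) \<le> K * exp (r * of_int j)"
  shows "((\<lambda>x. \<phi> (of_int \<lfloor>x / r\<rfloor> + 1/2)) has_integral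
           (of_real r * infsum \<phi> {m. \<exists>j::int. j < t \<and> m = of_int j + 1/2})) {..r * of_int t}"
proof -
  define H :: "real set" where "H = {m. \<exists>j::int. j < t \<and> m = of_int j + 1/2}"
  define g where "g n = of_int t - 1 - real n + 1/2" for n :: nat
  define a where "a n = \<phi> (g n)" for n
  have ga: "g n = of_int (t - 1 - int n) + 1/2" for n by (simp add: g_def)
  have abnd: "norm (a n) \<le> (K * exp (r * (of_int t - 1))) * exp (-r) ^ n" for n
  proof -
    have "norm (a n) \<le> K * exp (r * of_int (t - 1 - int n))" unfolding a_def ga by (rule bnd) simp
    also have "r * of_int (t - 1 - int n) = r * (of_int t - 1) + real n * (-r)" by (simp add: algebra_simps)
    also have "exp (r * (of_int t - 1) + real n * (-r)) = exp (r * (of_int t - 1)) * exp (-r) ^ n"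
      by (simp only: exp_add exp_of_nat_mult)
    finally show ?thesis by (simp add: mult.assoc)
  qed
  have geo: "summable (\<lambda>n. (K * exp (r * (of_int t - 1))) * exp (-r) ^ n)"
    using r by (intro summable_mult summable_geometric) simp
  have sn: "summable (\<lambda>n. norm (a n))"
    by (rule summable_comparison_test[OF _ geo]) (use abnd in auto)
  have sa: "summable a" using sn by (rule summable_norm_cancel)
  define s where "s = suminf a"
  have as: "a sums s" using sa by (simp add: s_def summable_sums)
  have hs: "(a has_sum s) UNIV" by (rule norm_summable_imp_has_sum[OF sn as])
  have bij: "bij_betw g UNIV H"
  proof (rule bij_betwI')
    fix x y :: nat show "(g x = g y) = (x = y)" by (simp add: g_def)
  next
    fix x :: nat show "g x \<in> H" unfolding H_def ga by (intro CollectI exI[of _ "t - 1 - int x"]) simp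
  next
    fix y assume "y \<in> H"
    then obtain j where j: "j < t" "y = of_int j + 1/2" unfolding H_def by blast
    have "g (nat (t - 1 - j)) = y" using j by (simp add: g_def)
    then show "\<exists>x\<in>UNIV. y = g x" by (metis UNIV_I)
  qed
  have eqa: "a = (\<lambda>x. \<phi> (g x))" by (simp add: a_def fun_eq_iff)
  from hs have "((\<lambda>x. \<phi> (g x)) has_sum s) UNIV" by (simp only: eqa)
  then have "(\<phi> has_sum s) H" using has_sum_reindex_bij_betw[OF bij, of \<phi> s] by simp
  then have inf: "infsum \<phi> H = s" by (rule infsumI)
  define \<Gamma> where "\<Gamma> x = \<phi> (of_int \<lfloor>x / r\<rfloor> + 1/2)" for x
  have piece: "(\<Gamma> has_integral (of_real r * (\<Sum>i<n. a i))) {r * (of_int t - real n)..r * of_int t}" for n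
  proof (induction n)
    case 0 show ?case by (simp add: has_integral_refl)
  next
    case (Suc n)
    define lo where "lo = r * (of_int t - real (Suc n))"
    define mid where "mid = r * (of_int t - real n)"
    have lm: "lo \<le> mid" "mid - lo = r" using r by (simp_all add: lo_def mid_def algebra_simps)
    have cell: "(\<Gamma> has_integral (of_real r * a n)) {lo..mid}"
    proof (rule has_integral_spike_finite[where S = "{mid}" and f = "\<lambda>x. a n"])
      show "finite {mid}" by simp
    next
      fix x assume x: "x \<in> {lo..mid} - {mid}"
      then have x1: "lo \<le> x" "x < mid" by auto
      have "r * (of_int t - 1 - real n) \<le> x" using x1(1) by (simp add: lo_def algebra_simps)
      then have "of_int t - 1 - real n \<le> x / r" using r by (simp add: pos_le_divide_eq mult.commute)
      then have A1: "of_int (t - 1 - int n) \<le> x / r" by simp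
      have "x < r * (of_int t - 1 - real n + 1)" using x1(2) by (simp add: mid_def algebra_simps)
      then have "x / r < of_int t - 1 - real n + 1" using r by (simp add: pos_divide_less_eq mult.commute)
      then have A2: "x / r < of_int (t - 1 - int n) + 1" by simp
      have "\<lfloor>x / r\<rfloor> = t - 1 - int n" using A1 A2 by (simp add: floor_eq_iff)
      then show "\<Gamma> x = a n" by (simp add: \<Gamma>_def a_def ga)
    next
      have "((\<lambda>x. a n) has_integral (Henstock_Kurzweil_Integration.content {lo..mid} *\<^sub>R a n)) {lo..mid}" by (rule has_integral_const_real)
      then show "((\<lambda>x. a n) has_integral (of_real r * a n)) {lo..mid}"
        using lm by (simp add: content_real scaleR_conv_of_real)
    qed
    have "(\<Gamma> has_integral (of_real r * a n + of_real r * (\<Sum>i<n. a i))) {lo..r * of_int t}"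
      by (rule has_integral_combine[OF lm(1) _ cell Suc.IH[folded mid_def]]) (use r in \<open>simp add: mid_def\<close>)
    then show ?case by (simp add: lo_def algebra_simps)
  qed
  have hint: "(\<lambda>x. K * exp (1 * x)) integrable_on {..r * of_int t}" by (rule exp_integrable_left) simp
  have le: "norm (\<Gamma> x) \<le> K * exp (1 * x)" if "x \<le> r * of_int t" for x
  proof -
    have "x / r \<le> of_int t" using that r by (simp add: pos_divide_le_eq mult.commute)
    then have jt: "\<lfloor>x / r\<rfloor> \<le> t" by linarith
    have "r * of_int \<lfloor>x / r\<rfloor> \<le> r * (x / r)" using r by (intro mult_left_mono) auto
    then have rj: "r * of_int \<lfloor>x / r\<rfloor> \<le> x" using r by simp
    have "norm (\<Gamma> x) \<le> K * exp (r * of_int \<lfloor>x / r\<rfloor>)" unfolding \<Gamma>_def by (rule bnd[OF jt])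
    also have "\<dots> \<le> K * exp (1 * x)" using rj K by (intro mult_left_mono) auto
    finally show ?thesis .
  qed
  have abot: "filterlim (\<lambda>n. r * (of_int t - real n)) at_bot sequentially"
    using r by real_asymp
  have I: "(\<lambda>n. of_real r * (\<Sum>i<n. a i)) \<longlonglongrightarrow> of_real r * s"
    using as unfolding sums_def by (intro tendsto_intros)
  have "(\<Gamma> has_integral (of_real r * s)) {..r * of_int t}"
    by (rule half_lim[OF hint le piece abot I])
  moreover have "infsum \<phi> {m. \<exists>j::int. j < t \<and> m = of_int j + 1/2} = s" using inf unfolding H_def .
  ultimately show ?thesis unfolding \<Gamma>_def by simp
qed

definition LL :: "complex \<Rightarrow> real \<Rightarrow> complex" where
  "LL z M = Ln (1 - complex_of_real (exp M) / z)"
definition LL' :: "complex \<Rightarrow> real \<Rightarrow> complex" where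
  "LL' z M = - (complex_of_real (exp M) / z) * inverse (1 - complex_of_real (exp M) / z)"

lemma z_nonzero: "z \<notin> complex_of_real ` {0..} \<Longrightarrow> z \<noteq> 0"
  by (metis atLeast_iff image_eqI of_real_0 order_refl)

lemma LL_notneg:
  assumes z: "z \<notin> complex_of_real ` {0..}"
  shows "1 - complex_of_real (exp M) / z \<notin> \<real>\<^sub>\<le>\<^sub>0"
proof
  assume "1 - complex_of_real (exp M) / z \<in> \<real>\<^sub>\<le>\<^sub>0"
  then obtain c where c: "1 - complex_of_real (exp M) / z = of_real c" "c \<le> 0"
    by (auto simp: nonpos_Reals_def)
  have z0: "z \<noteq> 0" using z_nonzero[OF z] .
  have "complex_of_real (exp M) / z = of_real (1 - c)" using c(1) by (simp add: algebra_simps)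
  then have "z = complex_of_real (exp M) / of_real (1 - c)" using z0 c(2)
    by (simp add: field_simps)
  also have "\<dots> = of_real (exp M / (1 - c))" by simp
  finally have "z \<in> complex_of_real ` {0..}" using c(2) by (intro image_eqI[where x = "exp M / (1 - c)"]) auto
  with z show False by blast
qed

lemma LL_nonzero: "z \<notin> complex_of_real ` {0..} \<Longrightarrow> 1 - complex_of_real (exp M) / z \<noteq> 0"
  using LL_notneg[of z M] by auto

lemma LL_deriv:
  assumes z: "z \<notin> complex_of_real ` {0..}"
  shows "(LL z has_vector_derivative LL' z M) (at M)"
proof -
  define w0 where "w0 = complex_of_real M"
  have inner: "((\<lambda>w. 1 - exp w / z) has_field_derivative (- (exp w0 / z))) (at w0)"
    using z_nonzero[OF z] by (auto intro!: derivative_eq_intros)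
  have e: "exp w0 = complex_of_real (exp M)" by (simp add: w0_def exp_of_real)
  have ln: "(Ln has_field_derivative inverse (1 - exp w0 / z)) (at (1 - exp w0 / z))"
    using has_field_derivative_Ln[OF LL_notneg[OF z, of M]] by (simp add: e)
  have "((\<lambda>w. Ln (1 - exp w / z)) has_field_derivative inverse (1 - exp w0 / z) * (- (exp w0 / z))) (at w0)"
    by (rule DERIV_chain2[OF ln inner])
  then have "((\<lambda>x. Ln (1 - exp (complex_of_real x) / z)) has_vector_derivative
      inverse (1 - exp w0 / z) * (- (exp w0 / z))) (at M)"
    unfolding w0_def by (rule has_vector_derivative_real_field)
  then show ?thesis unfolding LL_def LL'_def e by (simp add: exp_of_real mult.commute)
qed

lemma LL_cont: "z \<notin> complex_of_real ` {0..} \<Longrightarrow> continuous_on UNIV (LL z)"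
  using LL_deriv by (meson continuous_at_imp_continuous_on has_vector_derivative_continuous)

lemma LL'_cont: "z \<notin> complex_of_real ` {0..} \<Longrightarrow> continuous_on UNIV (LL' z)"
  unfolding LL'_def using LL_nonzero by (intro continuous_intros) auto

lemma expbound:
  fixes g :: "real \<Rightarrow> complex"
  assumes cg: "continuous_on UNIV g" and sm: "\<And>M. M \<le> M0 \<Longrightarrow> norm (g M) \<le> c0 * exp M"
  shows "\<exists>c. \<forall>M \<le> U. norm (g M) \<le> c * exp M"
proof -
  have "compact (g ` {M0..U})" by (intro compact_continuous_image continuous_on_subset[OF cg]) auto
  then obtain B where B: "\<forall>y \<in> g ` {M0..U}. norm y \<le> B" using compact_imp_bounded bounded_pos by metis
  define c where "c = max c0 (\<bar>B\<bar> / exp M0)"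
  show ?thesis
  proof (intro exI allI impI)
    fix M assume "M \<le> U"
    show "norm (g M) \<le> c * exp M"
    proof (cases "M \<le> M0")
      case True
      then have "norm (g M) \<le> c0 * exp M" by (rule sm)
      also have "\<dots> \<le> c * exp M" by (intro mult_right_mono) (auto simp: c_def)
      finally show ?thesis .
    next
      case False
      then have "norm (g M) \<le> B" using B \<open>M \<le> U\<close> by auto
      also have "B \<le> (\<bar>B\<bar> / exp M0) * exp M0" by simp
      also have "\<dots> \<le> (\<bar>B\<bar> / exp M0) * exp M" using False by (intro mult_left_mono) auto
      also have "\<dots> \<le> c * exp M" by (intro mult_right_mono) (auto simp: c_def)
      finally show ?thesis .
    qed
  qed
qed

lemma LL_small:
  assumes z: "z \<notin> complex_of_real ` {0..}" and M: "M \<le> ln (norm z / 4)"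
  shows "norm (LL z M) \<le> (2 / norm z) * exp M" "norm (LL' z M) \<le> (2 / norm z) * exp M"
proof -
  have z0: "norm z > 0" using z_nonzero[OF z] by simp
  define u where "u = complex_of_real (exp M) / z"
  have nu: "norm u = exp M / norm z" by (simp add: u_def norm_divide)
  have "exp M \<le> norm z / 4" using M z0 by (metis exp_le_cancel_iff exp_ln divide_pos_pos zero_less_numeral)
  then have nu4: "norm u \<le> 1/4" using z0 by (simp add: nu divide_simps)
  have "norm (Ln (1 + - u)) \<le> 2 * norm (- u)" by (rule norm_Ln_le) (use nu4 in simp)
  then show "norm (LL z M) \<le> (2 / norm z) * exp M" by (simp add: LL_def u_def[symmetric] nu)
  have n1: "norm (1 - u) \<ge> 1/2"
    using norm_triangle_ineq2[of 1 u] nu4 by simp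
  have "LL' z M = - u * inverse (1 - u)" by (simp add: LL'_def u_def)
  then have "norm (LL' z M) = norm u / norm (1 - u)"
    by (simp add: norm_mult norm_inverse divide_inverse)
  also have "\<dots> \<le> norm u / (1/2)" using n1 by (intro divide_left_mono) auto
  also have "\<dots> = (2 / norm z) * exp M" by (simp add: nu)
  finally show "norm (LL' z M) \<le> (2 / norm z) * exp M" .
qed

lemma LL_bounds:
  assumes z: "z \<notin> complex_of_real ` {0..}"
  shows "\<exists>c. \<forall>M \<le> U. norm (LL z M) \<le> c * exp M \<and> norm (LL' z M) \<le> c * exp M"
proof -
  obtain c1 where c1: "\<forall>M \<le> U. norm (LL z M) \<le> c1 * exp M"
    using expbound[OF LL_cont[OF z] LL_small(1)[OF z]] by blast
  obtain c2 where c2: "\<forall>M \<le> U. norm (LL' z M) \<le> c2 * exp M"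
    using expbound[OF LL'_cont[OF z] LL_small(2)[OF z]] by blast
  show ?thesis
  proof (intro exI allI impI conjI)
    fix M assume M: "M \<le> U"
    show "norm (LL z M) \<le> max c1 c2 * exp M"
      using c1 M by (meson max.cobounded1 mult_right_mono exp_ge_zero order_trans)
    show "norm (LL' z M) \<le> max c1 c2 * exp M"
      using c2 M by (meson max.cobounded2 mult_right_mono exp_ge_zero order_trans)
  qed
qed

lemma lip_deriv_bound:
  fixes V :: "real \<Rightarrow> real"
  assumes L: "1-lipschitz_on UNIV V" and d: "(V has_real_derivative D) (at x)"
  shows "\<bar>D\<bar> \<le> 1"
proof -
  have lim: "((\<lambda>y. (V y - V x) / (y - x)) \<longlongrightarrow> D) (at x)"
    using d by (simp add: has_field_derivative_iff)
  have ev: "eventually (\<lambda>y. norm ((V y - V x) / (y - x)) \<le> 1) (at x)"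
  proof (intro always_eventually allI)
    fix y
    have "dist (V y) (V x) \<le> 1 * dist y x" using lipschitz_onD[OF L] by blast
    then have le: "\<bar>V y - V x\<bar> \<le> \<bar>y - x\<bar>" by (simp add: dist_real_def)
    show "norm ((V y - V x) / (y - x)) \<le> 1"
    proof (cases "y = x")
      case False
      then have "\<bar>y - x\<bar> > 0" by simp
      then show ?thesis using le by (simp add: abs_divide divide_le_eq)
    qed simp
  qed
  have "norm D \<le> 1" by (rule Lim_norm_ubound[OF _ lim ev]) simp
  then show ?thesis by simp
qed

lemma lip_bound:
  fixes V :: "real \<Rightarrow> real"
  assumes "1-lipschitz_on UNIV V" shows "\<bar>V x\<bar> \<le> \<bar>V 0\<bar> + \<bar>x\<bar>"
proof -
  have "dist (V x) (V 0) \<le> 1 * dist x 0" using lipschitz_onD[OF assms] by blast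
  then have "\<bar>V x - V 0\<bar> \<le> \<bar>x\<bar>" by (simp add: dist_real_def)
  then show ?thesis by linarith
qed

lemma L_integrable_left:
  fixes L :: "real \<Rightarrow> complex"
  assumes Lc: "continuous_on UNIV L" and b: "\<And>x. x \<le> s \<Longrightarrow> norm (L x) \<le> c * exp x"
  shows "L integrable_on {..s}"
proof -
  have hint: "(\<lambda>x. c * exp (1 * x)) integrable_on {..s}" by (rule exp_integrable_left) simp
  have gi: "L integrable_on {s - real n..s}" for n
    by (intro integrable_continuous_interval continuous_on_subset[OF Lc]) auto
  have a: "filterlim (\<lambda>n. s - real n) at_bot sequentially" by real_asymp
  show ?thesis using tail_lim(1)[OF hint _ gi a] b by simp
qed

lemma minus_part:
  fixes V :: "real \<Rightarrow> real" and r :: "nat \<Rightarrow> real" and b :: "nat \<Rightarrow> real \<Rightarrow> real"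
    and t :: "nat \<Rightarrow> int" and \<tau> :: real and z :: complex
  assumes V_cont: "continuous_on UNIV V"
    and V_lip: "1-lipschitz_on UNIV V"
    and V_pw: "piecewise_differentiable_real V"
    and r_pos: "\<And>k. r k > 0"
    and r_lim: "r \<longlonglongrightarrow> 0"
    and b_path: "\<And>k. lattice_path (b k)"
    and B_unif: "uniform_limit UNIV (\<lambda>k \<tau>'. r k * b k (\<tau>' / r k)) V sequentially"
    and t_lim: "(\<lambda>k. r k * real_of_int (t k)) \<longlonglongrightarrow> \<tau>"
    and z: "z \<notin> complex_of_real ` {0..}"
  shows "\<exists>I. ((\<lambda>M. (1/2) * complex_of_real (1 + deriv V M) * LL z M) has_integral I) {..\<tau>} \<and>
     (\<lambda>k. complex_of_real (r k) * infsum (\<lambda>m. Ln (1 - complex_of_real (exp (- r k) powr (- m)) / z))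
           {m \<in> Dminus (b k). m < real_of_int (t k)}) \<longlonglongrightarrow> I"
proof -
  define T where "T = (\<lambda>k. r k * real_of_int (t k))"
  define Bk where "Bk = (\<lambda>k x. r k * b k (x / r k))"
  define \<sigma> where "\<sigma> = (\<lambda>k x. sl (b k) \<lfloor>x / r k\<rfloor>)"
  define mid where "mid = (\<lambda>k x. r k * (of_int \<lfloor>x / r k\<rfloor> + 1/2))"
  define L where "L = LL z"
  define L' where "L' = LL' z"
  have Tlim: "T \<longlonglongrightarrow> \<tau>" unfolding T_def by (rule t_lim)
  obtain U where U: "\<And>k. norm (T k) \<le> U"
    using BseqD[OF convergent_imp_Bseq[OF convergentI[OF Tlim]]] by blast
  have TU: "T k \<le> U" for k using U[of k] by simp
  have tauU: "\<tau> \<le> U" using Tlim TU by (intro LIMSEQ_le_const2) auto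
  obtain R where R: "\<And>k. norm (r k) \<le> R" "R > 0"
    using BseqD[OF convergent_imp_Bseq[OF convergentI[OF r_lim]]] by blast
  have rR: "r k \<le> R" for k using R(1)[of k] by simp
  obtain c where c: "\<And>M. M \<le> U + R \<Longrightarrow> norm (L M) \<le> c * exp M \<and> norm (L' M) \<le> c * exp M"
    using LL_bounds[OF z, of "U + R"] unfolding L_def L'_def by blast
  have cL: "M \<le> U + R \<Longrightarrow> norm (L M) \<le> c * exp M" for M using c by blast
  have cL': "M \<le> U + R \<Longrightarrow> norm (L' M) \<le> c * exp M" for M using c by blast
  have c0: "c \<ge> 0" using cL[of U] R(2) by (auto dest: order_trans[OF norm_ge_zero] simp: zero_le_mult_iff)
  have Lc: "continuous_on UNIV L" unfolding L_def by (rule LL_cont[OF z])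
  have L'c: "continuous_on UNIV L'" unfolding L'_def by (rule LL'_cont[OF z])
  have Ld: "(L has_vector_derivative L' x) (at x)" for x unfolding L_def L'_def by (rule LL_deriv[OF z])
  obtain SV where SV1: "\<And>a b. finite (SV \<inter> {a..b})" and SV2: "\<And>x. x \<notin> SV \<Longrightarrow> V differentiable (at x)"
    using V_pw unfolding piecewise_differentiable_real_def by blast
  define wV where "wV = (\<lambda>x. if x \<in> SV then 0 else deriv V x)"
  have VD: "(V has_real_derivative wV x) (at x)" if "x \<notin> SV" for x
    using SV2[OF that] that by (simp add: wV_def DERIV_deriv_iff_real_differentiable)
  have wVb: "\<bar>wV x\<bar> \<le> 1" for x
  proof (cases "x \<in> SV")
    case False then show ?thesis using lip_deriv_bound[OF V_lip VD[OF False]] by simp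
  qed (simp add: wV_def)
  have Vb: "\<bar>V x\<bar> \<le> \<bar>V 0\<bar> + \<bar>x\<bar>" for x by (rule lip_bound[OF V_lip])
  have SVneg: "negligible SV" by (rule neg_countable[OF locfin_countable[OF SV1]])
  have Bkpt: "(\<lambda>k. Bk k x) \<longlonglongrightarrow> V x" for x
    using tendsto_uniform_limitI[OF B_unif, of x] unfolding Bk_def by simp
  obtain A0 where A0: "\<And>k. norm (Bk k 0) \<le> A0"
    using BseqD[OF convergent_imp_Bseq[OF convergentI[OF Bkpt[of 0]]]] by blast
  define Ck where "Ck = (\<lambda>k. {x. x / r k = of_int \<lfloor>x / r k\<rfloor>})"
  have Ckfin: "finite (Ck k \<inter> {a..b})" for k a b unfolding Ck_def by (rule lattice_locfin[OF r_pos])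
  have bcont: "continuous_on UNIV (b k)" for k using b_path[of k] unfolding lattice_path_def by blast
  have Bkc: "continuous_on UNIV (Bk k)" for k
    unfolding Bk_def using r_pos[of k] by (intro continuous_intros continuous_on_compose2[OF bcont[of k]]) auto
  have Bkd: "(Bk k has_real_derivative \<sigma> k x) (at x)" if "x \<notin> Ck k" for k x
    unfolding Bk_def \<sigma>_def by (rule lp_scaled_deriv[OF b_path r_pos]) (use that in \<open>simp add: Ck_def\<close>)
  have \<sigma>v: "\<sigma> k x \<in> {1, -1}" for k x unfolding \<sigma>_def by (rule lp_closed[OF b_path])
  have \<sigma>b: "\<bar>\<sigma> k x\<bar> \<le> 1" for k x using \<sigma>v[of k x] by auto
  have Bkb: "\<bar>Bk k x\<bar> \<le> A0 + \<bar>x\<bar>" for k x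
  proof -
    have "\<bar>Bk k x - Bk k 0\<bar> \<le> \<bar>x - 0\<bar>"
      by (rule ftc_lip[OF Ckfin Bkc Bkd]) (use \<sigma>b in auto)
    then show ?thesis using A0[of k] by simp
  qed
  have fbT: "x \<le> T k \<Longrightarrow> norm (L x) \<le> c * exp x" for k x using cL[of x] TU[of k] R(2) by auto
  have f'bT: "x \<le> T k \<Longrightarrow> norm (L' x) \<le> c * exp x" for k x using cL'[of x] TU[of k] R(2) by auto
  have IBPk: "((\<lambda>x. of_real (\<sigma> k x) * L x) has_integral
        (of_real (Bk k (T k)) * L (T k) - integral {..T k} (\<lambda>x. of_real (Bk k x) * L' x))) {..T k}" for k
    by (rule ibp(2)[OF Ckfin Bkc Bkd \<sigma>b Bkb Ld L'c fbT f'bT])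
  have Lint: "L integrable_on {..T k}" for k by (rule L_integrable_left[OF Lc fbT])
  define \<phi> where "\<phi> = (\<lambda>k m. if deriv (b k) m = 1 then L (r k * m) else 0)"
  define H :: "nat \<Rightarrow> real set" where "H = (\<lambda>k. {m. \<exists>j::int. j < t k \<and> m = of_int j + 1/2})"
  have SA: "((\<lambda>x. \<phi> k (of_int \<lfloor>x / r k\<rfloor> + 1/2)) has_integral (of_real (r k) * infsum (\<phi> k) (H k))) {..T k}" for k
    unfolding T_def H_def
  proof (rule stepA[OF r_pos, of "c * exp (r k / 2)"])
    show "0 \<le> c * exp (r k / 2)" using c0 by simp
    fix j :: int assume j: "j \<le> t k"
    have "r k * of_int j \<le> r k * of_int (t k)" using j r_pos[of k] by (intro mult_left_mono) auto
    moreover have "r k * (of_int j + 1/2) = r k * of_int j + r k / 2" by (simp add: algebra_simps)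
    ultimately have "r k * (of_int j + 1/2) \<le> U + R" using TU[of k] rR[of k] r_pos[of k] unfolding T_def by linarith
    then have "norm (L (r k * (of_int j + 1/2))) \<le> c * exp (r k * (of_int j + 1/2))" by (rule cL)
    also have "\<dots> = c * exp (r k / 2) * exp (r k * of_int j)" by (simp add: algebra_simps flip: exp_add)
    finally show "norm (\<phi> k (of_int j + 1/2)) \<le> c * exp (r k / 2) * exp (r k * of_int j)"
      using c0 by (simp add: \<phi>_def)
  qed
  have infeq: "infsum (\<lambda>m. Ln (1 - complex_of_real (exp (- r k) powr (- m)) / z))
           {m \<in> Dminus (b k). m < real_of_int (t k)} = infsum (\<phi> k) (H k)" for k
  proof (rule infsum_cong_neutral)
    fix x assume x: "x \<in> H k - {m \<in> Dminus (b k). m < real_of_int (t k)}"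
    then obtain j :: int where j: "j < t k" "x = of_int j + 1/2" unfolding H_def by blast
    then have "x < real_of_int (t k)" by linarith
    then have "deriv (b k) x \<noteq> 1" using x j unfolding Dminus_def by auto
    then show "\<phi> k x = 0" by (simp add: \<phi>_def)
  next
    fix x assume x: "x \<in> {m \<in> Dminus (b k). m < real_of_int (t k)} - H k"
    then obtain j :: int where j: "x = of_int j + 1/2" "x < of_int (t k)" unfolding Dminus_def by blast
    then have "j < t k" by linarith
    then show "Ln (1 - complex_of_real (exp (- r k) powr (- x)) / z) = 0" using x j unfolding H_def by blast
  next
    fix x assume x: "x \<in> {m \<in> Dminus (b k). m < real_of_int (t k)} \<inter> H k"
    then have "deriv (b k) x = 1" unfolding Dminus_def by blast
    then show "Ln (1 - complex_of_real (exp (- r k) powr (- x)) / z) = \<phi> k x"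
      by (simp add: \<phi>_def L_def LL_def exp_powr_real mult.commute)
  qed
  define g where "g = (\<lambda>k x. of_real ((1 + \<sigma> k x) / 2) * (L (mid k x) - L x))"
  have \<Gamma>eq: "\<phi> k (of_int \<lfloor>x / r k\<rfloor> + 1/2) = g k x + (1/2) * L x + (1/2) * (of_real (\<sigma> k x) * L x)" for k x
  proof -
    have d: "deriv (b k) (of_int \<lfloor>x / r k\<rfloor> + 1/2) = \<sigma> k x"
      unfolding \<sigma>_def by (rule lp_deriv_half[OF b_path])
    show ?thesis using \<sigma>v[of k x] d by (auto simp: \<phi>_def g_def mid_def algebra_simps)
  qed
  have gint: "(g k has_integral (of_real (r k) * infsum (\<phi> k) (H k) - (1/2) * integral {..T k} L
      - (1/2) * (of_real (Bk k (T k)) * L (T k) - integral {..T k} (\<lambda>x. of_real (Bk k x) * L' x)))) {..T k}" for k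
  proof -
    have "((\<lambda>x. \<phi> k (of_int \<lfloor>x / r k\<rfloor> + 1/2) - (1/2) * L x - (1/2) * (of_real (\<sigma> k x) * L x)) has_integral
      (of_real (r k) * infsum (\<phi> k) (H k) - (1/2) * integral {..T k} L
      - (1/2) * (of_real (Bk k (T k)) * L (T k) - integral {..T k} (\<lambda>x. of_real (Bk k x) * L' x)))) {..T k}"
      by (intro has_integral_diff SA has_integral_mult_right IBPk integrable_integral Lint)
    moreover have "(\<lambda>x. \<phi> k (of_int \<lfloor>x / r k\<rfloor> + 1/2) - (1/2) * L x - (1/2) * (of_real (\<sigma> k x) * L x)) = g k"
      by (rule ext) (simp add: \<Gamma>eq)
    ultimately show ?thesis by simp
  qed
  have hB: "(\<lambda>x. (2 * c * exp R) * exp (1 * x)) integrable_on {..U}" by (rule exp_integrable_left) simp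
  have midb: "mid k x \<le> x + R \<and> x - r k \<le> mid k x \<and> mid k x \<le> x + r k" for k x
  proof -
    have f1: "of_int \<lfloor>x / r k\<rfloor> \<le> x / r k" "x / r k < of_int \<lfloor>x / r k\<rfloor> + 1" by linarith+
    have "r k * of_int \<lfloor>x / r k\<rfloor> \<le> r k * (x / r k)" using f1(1) r_pos[of k] by (intro mult_left_mono) auto
    then have a1: "r k * of_int \<lfloor>x / r k\<rfloor> \<le> x" using r_pos[of k] by simp
    have "r k * (x / r k) < r k * (of_int \<lfloor>x / r k\<rfloor> + 1)" using f1(2) r_pos[of k] by (intro mult_strict_left_mono) auto
    then have a2: "x < r k * of_int \<lfloor>x / r k\<rfloor> + r k" using r_pos[of k] by (simp add: algebra_simps)
    have e: "mid k x = r k * of_int \<lfloor>x / r k\<rfloor> + r k / 2" by (simp add: mid_def algebra_simps)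
    show ?thesis using a1 a2 e rR[of k] r_pos[of k] by linarith
  qed
  have n1: "norm (complex_of_real ((1 + \<sigma> k x) / 2)) \<le> 1" for k x using \<sigma>v[of k x] by auto
  have eR: "1 \<le> exp R" using R(2) by simp
  have gb: "norm (g k x) \<le> (2 * c * exp R) * exp (1 * x)" if "x \<le> U" for k x
  proof -
    have "norm (L (mid k x)) \<le> c * exp (mid k x)" using midb[of k x] that by (intro cL) linarith
    also have "\<dots> \<le> c * exp (x + R)" using midb[of k x] c0 by (intro mult_left_mono) auto
    finally have m1: "norm (L (mid k x)) \<le> c * exp R * exp x" by (simp add: exp_add mult_ac)
    have "c * 1 \<le> c * exp R" using c0 eR by (intro mult_left_mono) auto
    from mult_right_mono[OF this, of "exp x"] have ce: "c * exp x \<le> c * exp R * exp x" by simp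
    have "norm (L x) \<le> c * exp x" using that R(2) by (intro cL) linarith
    with ce have m2: "norm (L x) \<le> c * exp R * exp x" by linarith
    have "norm (g k x) = norm (complex_of_real ((1 + \<sigma> k x) / 2)) * norm (L (mid k x) - L x)"
      by (simp add: g_def norm_mult)
    also have "\<dots> \<le> 1 * norm (L (mid k x) - L x)" using n1[of k x] by (intro mult_right_mono) auto
    also have "\<dots> \<le> norm (L (mid k x)) + norm (L x)" by (simp add: norm_triangle_ineq4)
    also have "\<dots> \<le> (2 * c * exp R) * exp (1 * x)" using m1 m2 by simp
    finally show ?thesis .
  qed
  have gconv: "(\<lambda>k. g k x) \<longlonglongrightarrow> 0" for x
  proof -
    have mconv: "(\<lambda>k. mid k x) \<longlonglongrightarrow> x"
    proof -
      have lo: "(\<lambda>k. x - r k) \<longlonglongrightarrow> x" using tendsto_diff[OF tendsto_const r_lim] by simp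
      have hi: "(\<lambda>k. x + r k) \<longlonglongrightarrow> x" using tendsto_add[OF tendsto_const r_lim] by simp
      show ?thesis by (rule tendsto_sandwich[OF _ _ lo hi]) (use midb in auto)
    qed
    have "(\<lambda>k. L (mid k x)) \<longlonglongrightarrow> L x"
      by (rule isCont_tendsto_compose[OF _ mconv]) (use Lc in \<open>simp add: continuous_on_eq_continuous_at\<close>)
    then have "(\<lambda>k. L (mid k x) - L x) \<longlonglongrightarrow> 0" by (rule LIM_zero)
    then have nz: "(\<lambda>k. norm (L (mid k x) - L x)) \<longlonglongrightarrow> 0" by (rule tendsto_norm_zero)
    have le: "norm (g k x) \<le> norm (L (mid k x) - L x)" for k
      unfolding g_def norm_mult using n1[of k x] by (intro mult_left_le_one_le) auto
    show ?thesis by (rule Lim_null_comparison[OF _ nz]) (use le in auto)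
  qed
  have gI: "g k integrable_on {..T k}" for k using gint by blast
  have SB: "(\<lambda>k. integral {..T k} (g k)) \<longlonglongrightarrow> integral {..\<tau>} (\<lambda>x. 0::complex)"
    by (rule move_lim(2)[OF gI hB gb _ Tlim TU]) (auto intro: gconv)
  then have SB0: "(\<lambda>k. integral {..T k} (g k)) \<longlonglongrightarrow> 0" by simp
  have hD: "(\<lambda>x. c * exp (1 * x)) integrable_on {..U}" by (rule exp_integrable_left) simp
  have LbU: "x \<le> U \<Longrightarrow> norm (L x) \<le> c * exp (1 * x)" for x using cL[of x] R(2) by simp
  have SD1: "L integrable_on {..\<tau>}"
    by (rule move_lim(1)[of "\<lambda>k. L" T "\<lambda>x. c * exp (1 * x)" U \<tau> L, OF Lint hD LbU _ Tlim TU]) auto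
  have SD2: "(\<lambda>k. integral {..T k} L) \<longlonglongrightarrow> integral {..\<tau>} L"
    by (rule move_lim(2)[of "\<lambda>k. L" T "\<lambda>x. c * exp (1 * x)" U \<tau> L, OF Lint hD LbU _ Tlim TU]) auto
  define KF where "KF = c * ((A0 + \<bar>U\<bar>) * exp (\<bar>U\<bar> / 2) + 2)"
  have A00: "A0 \<ge> 0" using A0[of 0] by (auto dest: order_trans[OF norm_ge_zero])
  have hF: "(\<lambda>x. KF * exp ((1/2) * x)) integrable_on {..U}" by (rule exp_integrable_left) simp
  have Fb: "norm (of_real (Bk k x) * L' x) \<le> KF * exp ((1/2) * x)" if "x \<le> U" for k x
  proof -
    have "norm (of_real (Bk k x) * L' x) = \<bar>Bk k x\<bar> * norm (L' x)" by (simp add: norm_mult)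
    also have "\<dots> \<le> (A0 + \<bar>x\<bar>) * (c * exp x)"
      using Bkb[of k x] cL'[of x] that R(2) by (intro mult_mono) auto
    also have "\<dots> = c * ((A0 + \<bar>x\<bar>) * exp x)" by simp
    also have "\<dots> \<le> c * (((A0 + \<bar>U\<bar>) * exp (\<bar>U\<bar>/2) + 2) * exp (x/2))"
      using polyexp_bound[OF A00 that] c0 by (intro mult_left_mono) auto
    finally show ?thesis by (simp add: KF_def mult_ac)
  qed
  have Fi: "(\<lambda>x. of_real (Bk k x) * L' x) integrable_on {..T k}" for k
    by (rule ibp(1)[OF Ckfin Bkc Bkd \<sigma>b Bkb Ld L'c fbT f'bT])
  have Fconv: "(\<lambda>k. of_real (Bk k x) * L' x) \<longlonglongrightarrow> of_real (V x) * L' x" for x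
    by (intro tendsto_intros Bkpt)
  have SF: "(\<lambda>k. integral {..T k} (\<lambda>x. of_real (Bk k x) * L' x)) \<longlonglongrightarrow> integral {..\<tau>} (\<lambda>x. of_real (V x) * L' x)"
    by (rule move_lim(2)[of "\<lambda>k x. of_real (Bk k x) * L' x" T "\<lambda>x. KF * exp ((1/2) * x)" U \<tau> "\<lambda>x. of_real (V x) * L' x", OF Fi hF Fb _ Tlim TU]) (auto intro: Fconv)
  have BT: "(\<lambda>k. Bk k (T k)) \<longlonglongrightarrow> V \<tau>"
  proof -
    have d: "(\<lambda>k. Bk k (T k) - V (T k)) \<longlonglongrightarrow> 0"
    proof (rule tendstoI)
      fix e :: real assume "e > 0"
      from uniform_limitD[OF B_unif this] have "\<forall>\<^sub>F k in sequentially. \<forall>x\<in>UNIV. dist (r k * b k (x / r k)) (V x) < e" .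
      then show "\<forall>\<^sub>F k in sequentially. dist (Bk k (T k) - V (T k)) 0 < e"
        by (elim eventually_mono) (simp add: Bk_def dist_real_def)
    qed
    have "(\<lambda>k. V (T k)) \<longlonglongrightarrow> V \<tau>"
      by (rule isCont_tendsto_compose[OF _ Tlim]) (use V_cont in \<open>simp add: continuous_on_eq_continuous_at\<close>)
    from tendsto_add[OF d this] show ?thesis by simp
  qed
  have LT: "(\<lambda>k. L (T k)) \<longlonglongrightarrow> L \<tau>"
    by (rule isCont_tendsto_compose[OF _ Tlim]) (use Lc in \<open>simp add: continuous_on_eq_continuous_at\<close>)
  have fbt: "x \<le> \<tau> \<Longrightarrow> norm (L x) \<le> c * exp x" for x using cL[of x] tauU R(2) by auto
  have f'bt: "x \<le> \<tau> \<Longrightarrow> norm (L' x) \<le> c * exp x" for x using cL'[of x] tauU R(2) by auto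
  have IBPV: "((\<lambda>x. of_real (wV x) * L x) has_integral
        (of_real (V \<tau>) * L \<tau> - integral {..\<tau>} (\<lambda>x. of_real (V x) * L' x))) {..\<tau>}"
    by (rule ibp(2)[OF SV1 V_cont VD wVb Vb Ld L'c fbt f'bt])
  define I where "I = (1/2) * integral {..\<tau>} L + (1/2) * (of_real (V \<tau>) * L \<tau> - integral {..\<tau>} (\<lambda>x. of_real (V x) * L' x))"
  have HI: "((\<lambda>M. (1/2) * complex_of_real (1 + deriv V M) * LL z M) has_integral I) {..\<tau>}"
  proof -
    have "((\<lambda>x. (1/2) * L x + (1/2) * (of_real (wV x) * L x)) has_integral I) {..\<tau>}"
      unfolding I_def by (intro has_integral_add has_integral_mult_right IBPV integrable_integral SD1)
    then show ?thesis
    proof (rule has_integral_spike[OF SVneg, rotated])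
      fix x assume "x \<in> {..\<tau>} - SV"
      then have "wV x = deriv V x" by (simp add: wV_def)
      then show "(1/2) * complex_of_real (1 + deriv V x) * LL z x = (1/2) * L x + (1/2) * (of_real (wV x) * L x)"
        by (simp add: L_def algebra_simps)
    qed
  qed
  have lim: "(\<lambda>k. integral {..T k} (g k) + (1/2) * integral {..T k} L + (1/2) * (of_real (Bk k (T k)) * L (T k)
      - integral {..T k} (\<lambda>x. of_real (Bk k x) * L' x))) \<longlonglongrightarrow> 0 + (1/2) * integral {..\<tau>} L + (1/2) * (of_real (V \<tau>) * L \<tau> - integral {..\<tau>} (\<lambda>x. of_real (V x) * L' x))"
    by (intro tendsto_intros SB0 SD2 SF BT LT)
  have eqk: "complex_of_real (r k) * infsum (\<lambda>m. Ln (1 - complex_of_real (exp (- r k) powr (- m)) / z))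
           {m \<in> Dminus (b k). m < real_of_int (t k)} = integral {..T k} (g k) + (1/2) * integral {..T k} L + (1/2) * (of_real (Bk k (T k)) * L (T k)
      - integral {..T k} (\<lambda>x. of_real (Bk k x) * L' x))" for k
    using integral_unique[OF gint[of k]] infeq[of k] by (simp add: algebra_simps)
  have lim2: "(\<lambda>k. complex_of_real (r k) * infsum (\<lambda>m. Ln (1 - complex_of_real (exp (- r k) powr (- m)) / z))
           {m \<in> Dminus (b k). m < real_of_int (t k)}) \<longlonglongrightarrow> I"
    using lim unfolding eqk I_def by simp
  show ?thesis using HI lim2 by blast
qed

lemma lp_reflect:
  assumes bp: "lattice_path b"
  shows "lattice_path (\<lambda>x. b (- x))"
  unfolding lattice_path_def
proof (intro conjI allI)
  have cb: "continuous_on UNIV b" using bp unfolding lattice_path_def by blast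
  show "continuous_on UNIV (\<lambda>x. b (- x))"
    by (intro continuous_on_compose2[OF cb] continuous_intros) auto
next
  fix a :: int
  define a' where "a' = - a - 1"
  have lin: "b y = b (of_int a') + sl b a' * (y - of_int a')" if "y \<in> {real_of_int a'..real_of_int a' + 1}" for y
    using lp_closed2[OF bp that] .
  have ba: "b (- of_int a) = b (of_int a') + sl b a'"
    using lin[of "of_int a' + 1"] by (simp add: a'_def)
  show "\<exists>s\<in>{1, - 1}. \<forall>x\<in>{real_of_int a<..<real_of_int a + 1}.
          b (- x) = b (- real_of_int a) + s * (x - real_of_int a)"
  proof (intro bexI ballI)
    fix x assume x: "x \<in> {real_of_int a<..<real_of_int a + 1}"
    then have "-x \<in> {real_of_int a'..real_of_int a' + 1}" by (auto simp: a'_def)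
    from lin[OF this] ba show "b (- x) = b (- real_of_int a) + (- sl b a') * (x - real_of_int a)"
      by (simp add: a'_def algebra_simps)
  next
    show "- sl b a' \<in> {1, -1}" using lp_closed[OF bp, of a'] by auto
  qed
qed

lemma deriv_reflect_half:
  assumes bp: "lattice_path b"
  shows "deriv (\<lambda>x. b (- x)) (- (of_int j + 1/2)) = - deriv b (of_int j + 1/2)"
proof -
  have e: "- (of_int j + 1/2) = of_int (- j - 1) + (1/2::real)" by simp
  have "deriv (\<lambda>x. b (- x)) (of_int (- j - 1) + 1/2) = sl (\<lambda>x. b (- x)) (- j - 1)"
    by (rule lp_deriv_half[OF lp_reflect[OF bp]])
  also have "\<dots> = - sl b j" by (simp add: sl_def add.commute)
  also have "\<dots> = - deriv b (of_int j + 1/2)" by (simp add: lp_deriv_half[OF bp])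
  finally show ?thesis by (simp only: e)
qed

lemma Dplus_reflect:
  assumes bp: "lattice_path b"
  shows "m \<in> Dplus b \<longleftrightarrow> - m \<in> Dminus (\<lambda>x. b (- x))"
proof
  assume "m \<in> Dplus b"
  then obtain j :: int where j: "m = of_int j + 1/2" "deriv b m = -1" unfolding Dplus_def by blast
  have "- m = of_int (- j - 1) + 1/2" using j by simp
  moreover have "deriv (\<lambda>x. b (- x)) (- m) = 1" using deriv_reflect_half[OF bp, of j] j by simp
  ultimately show "- m \<in> Dminus (\<lambda>x. b (- x))" unfolding Dminus_def by blast
next
  assume "- m \<in> Dminus (\<lambda>x. b (- x))"
  then obtain i :: int where i: "- m = of_int i + 1/2" "deriv (\<lambda>x. b (- x)) (- m) = 1" unfolding Dminus_def by blast
  define j where "j = - i - 1"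
  have mj: "m = of_int j + 1/2" using i by (simp add: j_def)
  have "deriv (\<lambda>x. b (- x)) (- m) = - deriv b m" using deriv_reflect_half[OF bp, of j] mj by simp
  then have "deriv b m = -1" using i by simp
  then show "m \<in> Dplus b" using mj unfolding Dplus_def by blast
qed

lemma z_inverse:
  assumes z: "z \<notin> complex_of_real ` {0..}"
  shows "inverse z \<notin> complex_of_real ` {0..}"
proof
  assume "inverse z \<in> complex_of_real ` {0..}"
  then obtain a where a: "a \<ge> 0" "inverse z = of_real a" by auto
  then have "z = of_real (inverse a)" by (metis inverse_inverse_eq of_real_inverse)
  then have "z \<in> complex_of_real ` {0..}" using a(1) by (intro image_eqI[where x = "inverse a"]) auto
  with z show False by blast
qed

theorem corollaryA2:
  fixes V :: "real \<Rightarrow> real" and r :: "nat \<Rightarrow> real" and b :: "nat \<Rightarrow> real \<Rightarrow> real"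
    and t :: "nat \<Rightarrow> int" and \<tau> :: real and z :: complex
  assumes V_cont: "continuous_on UNIV V"
    and V_lip: "1-lipschitz_on UNIV V"
    and V_pw: "piecewise_differentiable_real V"
    and r_pos: "\<And>k. r k > 0"
    and r_lim: "r \<longlonglongrightarrow> 0"
    and b_path: "\<And>k. lattice_path (b k)"
    and B_unif: "uniform_limit UNIV (\<lambda>k \<tau>'. r k * b k (\<tau>' / r k)) V sequentially"
    and t_lim: "(\<lambda>k. r k * real_of_int (t k)) \<longlonglongrightarrow> \<tau>"
    and z_dom: "z \<notin> complex_of_real ` {0..}"
  shows "(\<lambda>k. complex_of_real (r k) * lnPhi (b k) (exp (- r k)) z (real_of_int (t k)))
         \<longlonglongrightarrow>
           - integral {..\<tau>} (\<lambda>M. - (1/2) * complex_of_real (1 + deriv V M)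
                                 * Ln (1 - complex_of_real (exp M) / z))
           + integral {\<tau>..} (\<lambda>M. - (1/2) * complex_of_real (1 - deriv V M)
                                 * Ln (1 - complex_of_real (exp (- M)) * z))"
proof -
  define bt where "bt = (\<lambda>k x. b k (- x))"
  define Vt where "Vt = (\<lambda>x. V (- x))"
  define tt where "tt = (\<lambda>k. - t k)"
  define zt where "zt = inverse z"
  obtain SV where SV1: "\<And>a b. finite (SV \<inter> {a..b})" and SV2: "\<And>x. x \<notin> SV \<Longrightarrow> V differentiable (at x)"
    using V_pw unfolding piecewise_differentiable_real_def by blast
  have SVneg: "negligible SV" by (rule neg_countable[OF locfin_countable[OF SV1]])
  have VtD: "(Vt has_real_derivative - deriv V (- x)) (at x)" if "- x \<notin> SV" for x
  proof -
    have d: "(V has_real_derivative deriv V (- x)) (at (- x))"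
      using SV2[OF that] by (simp add: DERIV_deriv_iff_real_differentiable)
    have "((\<lambda>y. V (- y)) has_real_derivative deriv V (- x) * (- 1)) (at x)"
      by (rule DERIV_chain2[where f=V and g="\<lambda>y. - y", OF d]) (auto intro!: derivative_eq_intros)
    then show ?thesis by (simp add: Vt_def)
  qed
  obtain Im where Im1: "((\<lambda>M. (1/2) * complex_of_real (1 + deriv V M) * LL z M) has_integral Im) {..\<tau>}"
    and Im2: "(\<lambda>k. complex_of_real (r k) * infsum (\<lambda>m. Ln (1 - complex_of_real (exp (- r k) powr (- m)) / z))
           {m \<in> Dminus (b k). m < real_of_int (t k)}) \<longlonglongrightarrow> Im"
    using minus_part[OF V_cont V_lip V_pw r_pos r_lim b_path B_unif t_lim z_dom] by blast
  have Vt_cont: "continuous_on UNIV Vt" unfolding Vt_def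
    by (intro continuous_on_compose2[OF V_cont] continuous_intros) auto
  have Vt_lip: "1-lipschitz_on UNIV Vt"
  proof (rule lipschitz_onI)
    fix x y :: real
    have "dist (V (- x)) (V (- y)) \<le> 1 * dist (- x) (- y)" using lipschitz_onD[OF V_lip] by blast
    then show "dist (Vt x) (Vt y) \<le> 1 * dist x y" by (simp add: Vt_def dist_real_def abs_minus_commute)
  qed simp
  have Vt_pw: "piecewise_differentiable_real Vt"
    unfolding piecewise_differentiable_real_def
  proof (intro exI conjI allI impI)
    fix a b :: real
    have "uminus ` SV \<inter> {a..b} \<subseteq> uminus ` (SV \<inter> {-b..-a})" by auto
    then show "finite (uminus ` SV \<inter> {a..b})" using SV1 by (meson finite_imageI finite_subset)
  next
    fix x :: real assume "x \<notin> uminus ` SV"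
    then have "- x \<notin> SV" by (metis image_eqI minus_minus)
    from VtD[OF this] show "Vt differentiable (at x)"
      by (metis DERIV_deriv_iff_real_differentiable DERIV_imp_deriv)
  qed
  have bt_path: "lattice_path (bt k)" for k unfolding bt_def by (rule lp_reflect[OF b_path])
  have Bt_unif: "uniform_limit UNIV (\<lambda>k \<tau>'. r k * bt k (\<tau>' / r k)) Vt sequentially"
    unfolding uniform_limit_sequentially_iff
  proof (intro allI impI)
    fix e :: real assume "e > 0"
    then obtain N where N: "\<forall>n\<ge>N. \<forall>x\<in>UNIV. dist (r n * b n (x / r n)) (V x) < e"
      using B_unif unfolding uniform_limit_sequentially_iff by blast
    show "\<exists>N. \<forall>n\<ge>N. \<forall>x\<in>UNIV. dist (r n * bt n (x / r n)) (Vt x) < e"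
    proof (intro exI allI impI ballI)
      fix n x assume "n \<ge> N"
      then have "dist (r n * b n (- x / r n)) (V (- x)) < e" using N by blast
      then show "dist (r n * bt n (x / r n)) (Vt x) < e" by (simp add: bt_def Vt_def)
    qed
  qed
  have tt_lim: "(\<lambda>k. r k * real_of_int (tt k)) \<longlonglongrightarrow> - \<tau>"
    using tendsto_minus[OF t_lim] by (simp add: tt_def)
  have zt: "zt \<notin> complex_of_real ` {0..}" unfolding zt_def by (rule z_inverse[OF z_dom])
  obtain Ip where Ip1: "((\<lambda>M. (1/2) * complex_of_real (1 + deriv Vt M) * LL zt M) has_integral Ip) {..- \<tau>}"
    and Ip2: "(\<lambda>k. complex_of_real (r k) * infsum (\<lambda>m. Ln (1 - complex_of_real (exp (- r k) powr (- m)) / zt))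
           {m \<in> Dminus (bt k). m < real_of_int (tt k)}) \<longlonglongrightarrow> Ip"
    using minus_part[OF Vt_cont Vt_lip Vt_pw r_pos r_lim bt_path Bt_unif tt_lim zt] by blast
  have eqp: "infsum (\<lambda>m. Ln (1 - z * complex_of_real (exp (- r k) powr m))) {m \<in> Dplus (b k). m > real_of_int (t k)}
      = infsum (\<lambda>m. Ln (1 - complex_of_real (exp (- r k) powr (- m)) / zt)) {m \<in> Dminus (bt k). m < real_of_int (tt k)}" for k
  proof -
    have set: "{m \<in> Dplus (b k). m > real_of_int (t k)} = uminus ` {m \<in> Dminus (bt k). m < real_of_int (tt k)}"
    proof (intro equalityI subsetI)
      fix m assume "m \<in> {m \<in> Dplus (b k). m > real_of_int (t k)}"
      then have "- m \<in> {m \<in> Dminus (bt k). m < real_of_int (tt k)}"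
        using Dplus_reflect[OF b_path[of k], of m] by (auto simp: bt_def tt_def)
      then show "m \<in> uminus ` {m \<in> Dminus (bt k). m < real_of_int (tt k)}" by (metis image_eqI minus_minus)
    next
      fix m assume "m \<in> uminus ` {m \<in> Dminus (bt k). m < real_of_int (tt k)}"
      then obtain m' where m': "m = - m'" "m' \<in> Dminus (bt k)" "m' < real_of_int (tt k)" by auto
      then show "m \<in> {m \<in> Dplus (b k). m > real_of_int (t k)}"
        using Dplus_reflect[OF b_path[of k], of m] by (auto simp: bt_def tt_def)
    qed
    have "infsum (\<lambda>m. Ln (1 - z * complex_of_real (exp (- r k) powr m))) {m \<in> Dplus (b k). m > real_of_int (t k)}
      = infsum ((\<lambda>m. Ln (1 - z * complex_of_real (exp (- r k) powr m))) \<circ> uminus) {m \<in> Dminus (bt k). m < real_of_int (tt k)}"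
      unfolding set by (rule infsum_reindex) (simp add: inj_on_def)
    also have "\<dots> = infsum (\<lambda>m. Ln (1 - complex_of_real (exp (- r k) powr (- m)) / zt)) {m \<in> Dminus (bt k). m < real_of_int (tt k)}"
      by (rule infsum_cong) (simp add: zt_def divide_inverse mult.commute)
    finally show ?thesis .
  qed
  have lhs: "(\<lambda>k. complex_of_real (r k) * lnPhi (b k) (exp (- r k)) z (real_of_int (t k))) \<longlonglongrightarrow> Im - Ip"
  proof -
    have "complex_of_real (r k) * lnPhi (b k) (exp (- r k)) z (real_of_int (t k)) =
      complex_of_real (r k) * infsum (\<lambda>m. Ln (1 - complex_of_real (exp (- r k) powr (- m)) / z))
           {m \<in> Dminus (b k). m < real_of_int (t k)} -
      complex_of_real (r k) * infsum (\<lambda>m. Ln (1 - complex_of_real (exp (- r k) powr (- m)) / zt))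
           {m \<in> Dminus (bt k). m < real_of_int (tt k)}" for k
      unfolding lnPhi_def eqp[symmetric] by (simp add: algebra_simps)
    then show ?thesis using tendsto_diff[OF Im2 Ip2] by simp
  qed
  have int1: "integral {..\<tau>} (\<lambda>M. - (1/2) * complex_of_real (1 + deriv V M) * Ln (1 - complex_of_real (exp M) / z)) = - Im"
  proof -
    have "((\<lambda>M. - ((1/2) * complex_of_real (1 + deriv V M) * LL z M)) has_integral - Im) {..\<tau>}"
      by (rule has_integral_neg[OF Im1])
    then show ?thesis by (intro integral_unique) (simp add: LL_def)
  qed
  have int2: "integral {\<tau>..} (\<lambda>M. - (1/2) * complex_of_real (1 - deriv V M) * Ln (1 - complex_of_real (exp (- M)) * z)) = - Ip"
  proof -
    have "((\<lambda>M. (1/2) * complex_of_real (1 + deriv Vt (- M)) * LL zt (- M)) has_integral Ip) (uminus ` {..- \<tau>})"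
      by (rule has_integral_reflect_gen[OF Ip1])
    then have r1: "((\<lambda>M. (1/2) * complex_of_real (1 + deriv Vt (- M)) * LL zt (- M)) has_integral Ip) {\<tau>..}" by simp
    have r2: "((\<lambda>M. (1/2) * complex_of_real (1 - deriv V M) * Ln (1 - complex_of_real (exp (- M)) * z)) has_integral Ip) {\<tau>..}"
    proof (rule has_integral_spike[OF SVneg _ r1])
      fix x assume "x \<in> {\<tau>..} - SV"
      then have "- (- x) \<notin> SV" by simp
      then have d: "(Vt has_real_derivative - deriv V (- (- x))) (at (- x))" by (rule VtD)
      have "deriv Vt (- x) = - deriv V (- (- x))" by (rule DERIV_imp_deriv[OF d])
      then have dv: "deriv Vt (- x) = - deriv V x" by (simp only: minus_minus)
      have e1: "complex_of_real (exp (- x)) / inverse z = complex_of_real (exp (- x)) * z"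
        by (simp add: divide_inverse)
      have e2: "LL zt (- x) = Ln (1 - complex_of_real (exp (- x)) * z)"
        unfolding LL_def zt_def e1 ..
      have e3: "complex_of_real (1 + deriv Vt (- x)) = complex_of_real (1 - deriv V x)"
        unfolding dv by simp
      show "(1/2) * complex_of_real (1 - deriv V x) * Ln (1 - complex_of_real (exp (- x)) * z) =
          (1/2) * complex_of_real (1 + deriv Vt (- x)) * LL zt (- x)"
        unfolding e2 e3 ..
    qed
    from has_integral_neg[OF r2] show ?thesis by (intro integral_unique) simp
  qed
  show ?thesis unfolding int1 int2 using lhs by simp
qed

end
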